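(* Let $\varphi^{(1)},\varphi^{(2)},\varphi^{(3)},\dots$ be independent commuting variables, put $\varphi^{(-1)}=1$, $\varphi^{(0)}=0$, and let $$\varphi(\lambda)=\frac1\lambda+\sum_{k\ge1}\varphi^{(k)}\lambda^k,\qquad \varphi_\lambda=\frac{d\varphi}{d\lambda}=-\frac1{\lambda^2}+\sum_{k\ge1}k\varphi^{(k)}\lambda^{k-1}.$$ For $n\in\mathbb Z$ let $f_n=\mathfrak P_\varphi(\lambda^n\varphi_\lambda)$ (notation in the context), and let $S^{(n)}=\partial_{f_{1-n}}$. Then for all $n,m\in\mathbb Z$, $$[S^{(n)},S^{(m)}]=(m-n)\,S^{(n+m)},$$ i.e. the $S^{(n)}$, $n\in\mathbb Z$, span a Lie algebra with the commutation relations of the Witt algebra.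
   Context: All series have coefficients in the polynomial ring $R=\mathbb R[\varphi^{(1)},\varphi^{(2)},\dots]$. Let $w(\lambda)=1/\varphi(\lambda)=\lambda+O(\lambda^3)$, a power series in $\lambda$ without constant term. Every formal Laurent series $F$ in $\lambda$ with finitely many negative powers and coefficients in $R$ can be written uniquely as $F=\sum_{k\le m}c_k\,\varphi(\lambda)^k$ with $c_k\in R$ independent of $\lambda$ (i.e. as a Laurent series in $w$); write $[\varphi^k]F=c_k$, $P_\varphi F=\sum_{k=0}^{m}c_k\varphi(\lambda)^k$ and $\mathfrak P_\varphi F=F-P_\varphi F$. Then $\mathfrak P_\varphi F$ is a power series in $\lambda$ with no constant term (lowest order $\ge1$); in particular $f_n=\lambda^n\varphi_\lambda$ for $n\ge3$. For a formal series $f=\sum_{i\ge1}f^{(i)}\lambda^i$ with $f^{(i)}\in R$, $\partial_f$ denotes the derivation $\sum_{i\ge1}f^{(i)}\,\partial/\partial\varphi^{(i)}$ of $R$ (it acts on series coefficientwise). (In the paper, $\varphi^{(1)}=-y$, $\varphi^{(2)}=-x$, $\varphi^{(3)}=-z-y^2/2$ and $\varphi^{(k)}$, $k\ge4$, are nonlocal variables of a covering of the Gibbons–Tsarev equation, and the $S^{(n)}$ are the corresponding nonlocal symmetries written in these coordinates.) *)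

theory Defs
  imports "HOL-Library.Poly_Mapping" "HOL-Computational_Algebra.Formal_Laurent_Series"
begin

text \<open>The coefficient ring R = real[phi1, phi2, ...]: polynomials in countably many
  commuting variables, represented as finitely supported maps from monomials
  (finitely supported exponent vectors nat =>0 nat) to real coefficients.
  The variable with index 0 is not part of R; the carrier predicate in_R excludes it.\<close>

type_synonym R = "(nat \<Rightarrow>\<^sub>0 nat) \<Rightarrow>\<^sub>0 real"

definition var :: "nat \<Rightarrow> R" where
  "var k = Poly_Mapping.single (Poly_Mapping.single k 1) 1"

definition in_R :: "R \<Rightarrow> bool" where
  "in_R p \<longleftrightarrow> (\<forall>m \<in> Poly_Mapping.keys p. Poly_Mapping.lookup m 0 = 0)"

definition pd :: "nat \<Rightarrow> R \<Rightarrow> R" where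
  "pd i p = (\<Sum>m\<in>Poly_Mapping.keys p.
      Poly_Mapping.single (m - Poly_Mapping.single i 1) (Poly_Mapping.lookup p m * real (Poly_Mapping.lookup m i)))"

definition phi :: "R fls" where
  "phi = fls_X_inv + fps_to_fls (Abs_fps (\<lambda>k. if k = 0 then 0 else var k))"

definition phi_lam :: "R fls" where
  "phi_lam = fls_deriv phi"

definition wser :: "R fls" where
  "wser = (THE w. w * phi = 1)"

definition phipow :: "int \<Rightarrow> R fls" where
  "phipow k = (if 0 \<le> k then phi ^ nat k else wser ^ nat (- k))"

text \<open>F = sum_{k<=M} c_k phi^k (coefficientwise; terms with k < -j do not
  contribute to the coefficient of lambda^j since phi^k = w^(-k) has order -k).\<close>
definition is_phi_expansion :: "R fls \<Rightarrow> (int \<Rightarrow> R) \<Rightarrow> bool" where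
  "is_phi_expansion F c \<longleftrightarrow>
     (\<exists>M. (\<forall>k>M. c k = 0) \<and>
          (\<forall>j. fls_nth F j = (\<Sum>k\<in>{-j..M}. c k * fls_nth (phipow k) j)))"

definition phi_coeff :: "R fls \<Rightarrow> int \<Rightarrow> R" where
  "phi_coeff F = (THE c. is_phi_expansion F c)"

definition P_phi :: "R fls \<Rightarrow> R fls" where
  "P_phi F = (\<Sum>k\<in>{k. 0 \<le> k \<and> phi_coeff F k \<noteq> 0}. fls_const (phi_coeff F k) * phipow k)"

definition frakP_phi :: "R fls \<Rightarrow> R fls" where
  "frakP_phi F = F - P_phi F"

definition f_ser :: "int \<Rightarrow> R fls" where
  "f_ser n = frakP_phi (fls_X_intpow n * phi_lam)"

text \<open>The derivation partial_f = sum_{i>=1} f^(i) d/d phi^(i); on a polynomial only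
  the finitely many variables occurring in it contribute.\<close>
definition der :: "R fls \<Rightarrow> R \<Rightarrow> R" where
  "der f p = (\<Sum>i\<in>{i. i \<ge> 1 \<and> (\<exists>m\<in>Poly_Mapping.keys p. i \<in> Poly_Mapping.keys m)}. fls_nth f (int i) * pd i p)"

definition S :: "int \<Rightarrow> R \<Rightarrow> R" where
  "S n = der (f_ser (1 - n))"

end

theory Submission
  imports Defs "HOL-Computational_Algebra.Polynomial"
begin

abbreviation e1 :: "nat \<Rightarrow> (nat \<Rightarrow>\<^sub>0 nat)" where "e1 i \<equiv> Poly_Mapping.single i 1"

lemma R_expand: "(p::R) = (\<Sum>m\<in>Poly_Mapping.keys p. Poly_Mapping.single m (Poly_Mapping.lookup p m))"
proof (rule poly_mapping_eqI)
  fix k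
  show "Poly_Mapping.lookup p k = Poly_Mapping.lookup (\<Sum>m\<in>Poly_Mapping.keys p. Poly_Mapping.single m (Poly_Mapping.lookup p m)) k"
    by (simp add: lookup_sum lookup_single when_def in_keys_iff)
qed

lemma pd_gen:
  assumes "finite A" "Poly_Mapping.keys p \<subseteq> A"
  shows "pd i p = (\<Sum>m\<in>A. Poly_Mapping.single (m - e1 i) (Poly_Mapping.lookup p m * real (Poly_Mapping.lookup m i)))"
  unfolding pd_def
  by (rule sum.mono_neutral_left) (use assms in \<open>auto simp: in_keys_iff\<close>)

lemma pd_single: "pd i (Poly_Mapping.single m a) = Poly_Mapping.single (m - e1 i) (a * real (Poly_Mapping.lookup m i))"
  by (subst pd_gen[of "{m}"]) auto

lemma pd_add: "pd i (p + q) = pd i p + pd i q"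
proof -
  have f: "finite (Poly_Mapping.keys p \<union> Poly_Mapping.keys q)" by simp
  show ?thesis
    apply (subst pd_gen[OF f]) apply (rule keys_add)
    apply (subst pd_gen[OF f, of p]) apply blast
    apply (subst pd_gen[OF f, of q]) apply blast
    by (simp add: lookup_add distrib_right single_add sum.distrib)
qed

lemma pd_zero[simp]: "pd i 0 = 0" by (simp add: pd_def)

lemma pd_uminus: "pd i (- p) = - pd i p"
  using pd_add[of i "-p" p] by (simp add: eq_neg_iff_add_eq_0)

lemma pd_diff: "pd i (p - q) = pd i p - pd i q"
  using pd_add[of i p "-q"] pd_uminus[of i q] by simp

lemma pd_sum: "pd i (sum f A) = (\<Sum>x\<in>A. pd i (f x))"
  by (induction A rule: infinite_finite_induct) (auto simp: pd_add)

lemma pd_mono_mult: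
  "pd i (Poly_Mapping.single m a * Poly_Mapping.single m' b) =
     pd i (Poly_Mapping.single m a) * Poly_Mapping.single m' b + Poly_Mapping.single m a * pd i (Poly_Mapping.single m' b)"
proof -
  have l: "Poly_Mapping.single (m + m' - e1 i) (a * b * real (Poly_Mapping.lookup m i)) =
           Poly_Mapping.single (m - e1 i + m') (a * real (Poly_Mapping.lookup m i) * b)"
  proof (cases "Poly_Mapping.lookup m i = 0")
    case False
    have "m + m' - e1 i = m - e1 i + m'"
      by (rule poly_mapping_eqI) (use False in \<open>auto simp: lookup_add lookup_minus lookup_single when_def\<close>)
    then show ?thesis by (simp add: ac_simps)
  qed simp
  have r: "Poly_Mapping.single (m + m' - e1 i) (a * b * real (Poly_Mapping.lookup m' i)) =
           Poly_Mapping.single (m + (m' - e1 i)) (a * (b * real (Poly_Mapping.lookup m' i)))"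
  proof (cases "Poly_Mapping.lookup m' i = 0")
    case False
    have "m + m' - e1 i = m + (m' - e1 i)"
      by (rule poly_mapping_eqI) (use False in \<open>auto simp: lookup_add lookup_minus lookup_single when_def\<close>)
    then show ?thesis by (simp add: ac_simps)
  qed simp
  show ?thesis
    using l r by (simp add: mult_single pd_single lookup_add distrib_left single_add)
qed

lemma pd_mult: "pd i (p * q) = pd i p * q + p * pd i (q::R)"
proof -
  define P where "P = (\<lambda>m. Poly_Mapping.single m (Poly_Mapping.lookup p m))"
  define Q where "Q = (\<lambda>m. Poly_Mapping.single m (Poly_Mapping.lookup q m))"
  have p: "p = (\<Sum>m\<in>Poly_Mapping.keys p. P m)" unfolding P_def by (rule R_expand)
  have q: "q = (\<Sum>m\<in>Poly_Mapping.keys q. Q m)" unfolding Q_def by (rule R_expand)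
  have "pd i (p * q) = pd i ((\<Sum>m\<in>Poly_Mapping.keys p. P m) * (\<Sum>m\<in>Poly_Mapping.keys q. Q m))"
    using p q by simp
  also have "\<dots> = (\<Sum>m\<in>Poly_Mapping.keys p. \<Sum>m'\<in>Poly_Mapping.keys q. pd i (P m) * Q m' + P m * pd i (Q m'))"
    by (simp add: sum_product pd_sum P_def Q_def pd_mono_mult)
  also have "\<dots> = pd i (\<Sum>m\<in>Poly_Mapping.keys p. P m) * (\<Sum>m\<in>Poly_Mapping.keys q. Q m)
       + (\<Sum>m\<in>Poly_Mapping.keys p. P m) * pd i (\<Sum>m\<in>Poly_Mapping.keys q. Q m)"
    by (simp add: sum_product pd_sum sum.distrib)
  finally show ?thesis using p q by simp
qed

lemma pd_comm_single: "pd i (pd j (Poly_Mapping.single m a)) = pd j (pd i (Poly_Mapping.single m a))"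
proof (cases "i = j")
  case False
  have k: "m - e1 j - e1 i = m - e1 i - e1 j"
    by (rule poly_mapping_eqI) (auto simp: lookup_minus lookup_single when_def)
  have "Poly_Mapping.lookup (m - e1 j) i = Poly_Mapping.lookup m i"
       "Poly_Mapping.lookup (m - e1 i) j = Poly_Mapping.lookup m j"
    using False by (auto simp: lookup_minus lookup_single when_def)
  then show ?thesis using k by (simp add: pd_single ac_simps)
qed simp

lemma pd_comm: "pd i (pd j p) = pd j (pd i p)"
  by (subst (1 2) R_expand) (simp add: pd_sum pd_comm_single)

definition V :: "R \<Rightarrow> nat set" where
  "V p = {i. \<exists>m\<in>Poly_Mapping.keys p. i \<in> Poly_Mapping.keys m}"

lemma finite_V[simp]: "finite (V p)"
  unfolding V_def by auto

lemma pd_notV: "i \<notin> V p \<Longrightarrow> pd i p = 0"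
  unfolding pd_def V_def by (auto simp: in_keys_iff intro!: sum.neutral)

lemma pd_var: "pd i (var j) = (if i = j then 1 else 0)"
  by (auto simp: var_def pd_single lookup_single)

lemma pd_one[simp]: "pd i 1 = 0"
  by (metis pd_single single_one lookup_zero mult_zero_right of_nat_0 single_zero)

lemma pd_of_int[simp]: "pd i (of_int k) = 0"
  by (metis pd_single single_of_int lookup_zero mult_zero_right of_nat_0 single_zero)

definition VA :: "R \<Rightarrow> nat set" where "VA p = {i. i \<ge> 1 \<and> i \<in> V p}"

lemma finite_VA[simp]: "finite (VA p)" unfolding VA_def by simp

lemma der_VA: "der f p = (\<Sum>i\<in>VA p. fls_nth f (int i) * pd i p)"
  unfolding der_def VA_def V_def by (simp add: conj_commute)

lemma der_gen:
  assumes "finite B" "\<And>i. i \<in> B \<Longrightarrow> i \<ge> 1" "\<And>i. i \<ge> 1 \<Longrightarrow> i \<notin> B \<Longrightarrow> pd i q = 0"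
  shows "der f q = (\<Sum>i\<in>B. fls_nth f (int i) * pd i q)"
proof -
  have "der f q = (\<Sum>i\<in>B \<union> VA q. fls_nth f (int i) * pd i q)"
    unfolding der_VA by (rule sum.mono_neutral_left) (use assms pd_notV in \<open>auto simp: VA_def\<close>)
  also have "\<dots> = (\<Sum>i\<in>B. fls_nth f (int i) * pd i q)"
    by (rule sum.mono_neutral_right) (use assms pd_notV in \<open>auto simp: VA_def\<close>)
  finally show ?thesis .
qed

lemma der_add: "der f (p + q) = der f p + der f q"
proof -
  let ?B = "VA p \<union> VA q"
  have h: "\<And>i. i \<ge> 1 \<Longrightarrow> i \<notin> ?B \<Longrightarrow> pd i p = 0 \<and> pd i q = 0"
    using pd_notV by (auto simp: VA_def)
  have "der f (p + q) = (\<Sum>i\<in>?B. fls_nth f (int i) * pd i (p + q))"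
    by (rule der_gen) (use h in \<open>auto simp: VA_def pd_add\<close>)
  moreover have "der f p = (\<Sum>i\<in>?B. fls_nth f (int i) * pd i p)"
    by (rule der_gen) (use h in \<open>auto simp: VA_def\<close>)
  moreover have "der f q = (\<Sum>i\<in>?B. fls_nth f (int i) * pd i q)"
    by (rule der_gen) (use h in \<open>auto simp: VA_def\<close>)
  ultimately show ?thesis by (simp add: pd_add distrib_left sum.distrib)
qed

lemma der_zero[simp]: "der f 0 = 0" by (simp add: der_def)

lemma der_uminus: "der f (- p) = - der f p"
  using der_add[of f "-p" p] by (simp add: eq_neg_iff_add_eq_0)

lemma der_diff: "der f (p - q) = der f p - der f q"
  using der_add[of f p "-q"] der_uminus[of f q] by simp

lemma der_sum: "der f (sum g A) = (\<Sum>x\<in>A. der f (g x))"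
  by (induction A rule: infinite_finite_induct) (auto simp: der_add)

lemma der_mult: "der f (p * q) = der f p * q + p * der f q"
proof -
  let ?B = "VA p \<union> VA q"
  have h: "\<And>i. i \<ge> 1 \<Longrightarrow> i \<notin> ?B \<Longrightarrow> pd i p = 0 \<and> pd i q = 0"
    using pd_notV by (auto simp: VA_def)
  have "der f (p * q) = (\<Sum>i\<in>?B. fls_nth f (int i) * pd i (p * q))"
    by (rule der_gen) (use h in \<open>auto simp: VA_def pd_mult\<close>)
  moreover have "der f p = (\<Sum>i\<in>?B. fls_nth f (int i) * pd i p)"
    by (rule der_gen) (use h in \<open>auto simp: VA_def\<close>)
  moreover have "der f q = (\<Sum>i\<in>?B. fls_nth f (int i) * pd i q)"
    by (rule der_gen) (use h in \<open>auto simp: VA_def\<close>)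
  ultimately show ?thesis
    by (simp add: pd_mult distrib_left sum.distrib sum_distrib_left sum_distrib_right ac_simps)
qed

lemma VA_one: "VA 1 = {}" by (simp add: VA_def V_def)

lemma der_one[simp]: "der f 1 = 0" by (simp add: der_VA VA_one)

lemma der_of_int[simp]: "der f (of_int k) = 0"
  by (simp add: der_VA VA_def V_def flip: single_of_int)

lemma der_var: "k \<ge> 1 \<Longrightarrow> der f (var k) = fls_nth f (int k)"
proof -
  assume k: "k \<ge> 1"
  have "der f (var k) = (\<Sum>i\<in>{k}. fls_nth f (int i) * pd i (var k))"
    by (rule der_gen) (use k in \<open>auto simp: pd_var\<close>)
  then show ?thesis by (simp add: pd_var)
qed

lemma der_fadd: "der (F + G) p = der F p + der G p"
  by (simp add: der_VA distrib_right sum.distrib)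

lemma der_fdiff: "der (F - G) p = der F p - der G p"
  by (simp add: der_VA left_diff_distrib sum_subtractf)

lemma der_fofint: "der (of_int k * F) p = of_int k * der F p"
  by (simp add: der_VA fls_of_int sum_distrib_left mult.assoc)

definition Dfls :: "R fls \<Rightarrow> R fls \<Rightarrow> R fls" where
  "Dfls g F = Abs_fls (\<lambda>j. der g (fls_nth F j))"

lemma Dfls_nth[simp]: "fls_nth (Dfls g F) j = der g (fls_nth F j)"
proof -
  obtain N where "\<forall>n<N. fls_nth F n = 0" by (elim fls_nth_vanishes_belowE)
  then have "\<forall>n<N. der g (fls_nth F n) = 0" by simp
  then show ?thesis unfolding Dfls_def by (rule nth_Abs_fls_lower_bound)
qed

lemma der_der:
  "der f (der g p) = (\<Sum>i\<in>VA p. der f (fls_nth g (int i)) * pd i p)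
     + (\<Sum>j\<in>VA p. \<Sum>i\<in>VA p. fls_nth f (int j) * fls_nth g (int i) * pd j (pd i p))"
proof -
  define A where "A = VA p"
  define B where "B = A \<union> (\<Union>i\<in>A. VA (fls_nth g (int i)))"
  have fB: "finite B" unfolding B_def A_def by simp
  have B1: "\<And>j. j \<in> B \<Longrightarrow> j \<ge> 1" unfolding B_def A_def VA_def by auto
  have AB: "A \<subseteq> B" unfolding B_def by auto
  have pA: "\<And>j. j \<ge> 1 \<Longrightarrow> j \<notin> A \<Longrightarrow> pd j p = 0" unfolding A_def VA_def
    using pd_notV by auto
  have pg: "\<And>i j. i \<in> A \<Longrightarrow> j \<ge> 1 \<Longrightarrow> j \<notin> B \<Longrightarrow> pd j (fls_nth g (int i)) = 0"
    unfolding B_def VA_def using pd_notV by auto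
  have ppA: "\<And>i j. j \<ge> 1 \<Longrightarrow> j \<notin> A \<Longrightarrow> pd j (pd i p) = 0"
    using pA by (metis pd_comm pd_zero)
  have dg: "der g p = (\<Sum>i\<in>A. fls_nth g (int i) * pd i p)" unfolding A_def by (rule der_VA)
  have pdg: "pd j (der g p) = (\<Sum>i\<in>A. pd j (fls_nth g (int i)) * pd i p + fls_nth g (int i) * pd j (pd i p))" for j
    unfolding dg by (simp add: pd_sum pd_mult)
  have "der f (der g p) = (\<Sum>j\<in>B. fls_nth f (int j) * pd j (der g p))"
  proof (rule der_gen[OF fB B1])
    fix j :: nat assume j: "j \<ge> 1" "j \<notin> B"
    then have "j \<notin> A" using AB by auto
    then show "pd j (der g p) = 0" unfolding pdg using pg[OF _ j] ppA[OF j(1)] by simp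
  qed
  also have "\<dots> = (\<Sum>j\<in>B. \<Sum>i\<in>A. fls_nth f (int j) * pd j (fls_nth g (int i)) * pd i p)
      + (\<Sum>j\<in>B. \<Sum>i\<in>A. fls_nth f (int j) * fls_nth g (int i) * pd j (pd i p))"
    unfolding pdg by (simp add: sum_distrib_left distrib_left sum.distrib ac_simps)
  also have "(\<Sum>j\<in>B. \<Sum>i\<in>A. fls_nth f (int j) * pd j (fls_nth g (int i)) * pd i p)
      = (\<Sum>i\<in>A. der f (fls_nth g (int i)) * pd i p)"
  proof -
    have "(\<Sum>j\<in>B. \<Sum>i\<in>A. fls_nth f (int j) * pd j (fls_nth g (int i)) * pd i p)
       = (\<Sum>i\<in>A. (\<Sum>j\<in>B. fls_nth f (int j) * pd j (fls_nth g (int i))) * pd i p)"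
      by (subst sum.swap) (simp add: sum_distrib_right)
    also have "\<dots> = (\<Sum>i\<in>A. der f (fls_nth g (int i)) * pd i p)"
    proof (rule sum.cong[OF refl])
      fix i assume i: "i \<in> A"
      have "der f (fls_nth g (int i)) = (\<Sum>j\<in>B. fls_nth f (int j) * pd j (fls_nth g (int i)))"
        by (rule der_gen[OF fB B1]) (use pg[OF i] in auto)
      then show "(\<Sum>j\<in>B. fls_nth f (int j) * pd j (fls_nth g (int i))) * pd i p = der f (fls_nth g (int i)) * pd i p"
        by simp
    qed
    finally show ?thesis .
  qed
  also have "(\<Sum>j\<in>B. \<Sum>i\<in>A. fls_nth f (int j) * fls_nth g (int i) * pd j (pd i p))
      = (\<Sum>j\<in>A. \<Sum>i\<in>A. fls_nth f (int j) * fls_nth g (int i) * pd j (pd i p))"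
    by (rule sum.mono_neutral_right[OF fB AB]) (use ppA B1 in auto)
  finally show ?thesis unfolding A_def .
qed

lemma der_comm:
  "der f (der g p) - der g (der f p) = der (Dfls f g - Dfls g f) p"
proof -
  have sw: "(\<Sum>j\<in>VA p. \<Sum>i\<in>VA p. fls_nth f (int j) * fls_nth g (int i) * pd j (pd i p))
     = (\<Sum>j\<in>VA p. \<Sum>i\<in>VA p. fls_nth g (int j) * fls_nth f (int i) * pd j (pd i p))"
    by (subst sum.swap) (simp add: pd_comm ac_simps)
  show ?thesis
    unfolding der_der sw der_VA[of "Dfls f g - Dfls g f"]
    by (simp add: left_diff_distrib sum_subtractf)
qed

lemma fls_times_nth_bounds:
  fixes F G :: "'a::comm_ring_1 fls"
  assumes "\<And>k. k < a \<Longrightarrow> fls_nth F k = 0" "\<And>k. k < b \<Longrightarrow> fls_nth G k = 0"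
  shows "fls_nth (F * G) n = (\<Sum>i\<in>{a..n-b}. fls_nth F i * fls_nth G (n - i))"
proof (cases "F = 0 \<or> G = 0")
  case True then show ?thesis by auto
next
  case False
  then have nz: "F \<noteq> 0" "G \<noteq> 0" by auto
  have a: "a \<le> fls_subdegree F"
    using nz(1) assms(1) by (metis fls_subdegree_geI)
  have b: "b \<le> fls_subdegree G"
    using nz(2) assms(2) by (metis fls_subdegree_geI)
  have "fls_nth (F * G) n = (\<Sum>i\<in>{fls_subdegree F..n-fls_subdegree G}. fls_nth F i * fls_nth G (n - i))"
    by (rule fls_times_nth(2))
  also have "\<dots> = (\<Sum>i\<in>{a..n-b}. fls_nth F i * fls_nth G (n - i))"
    by (rule sum.mono_neutral_left) (use a b in auto)
  finally show ?thesis .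
qed

lemma Dfls_add: "Dfls g (F + G) = Dfls g F + Dfls g G"
  by (rule fls_eqI) (simp add: der_add)
lemma Dfls_diff: "Dfls g (F - G) = Dfls g F - Dfls g G"
  by (rule fls_eqI) (simp add: der_diff)
lemma Dfls_zero[simp]: "Dfls g 0 = 0"
  by (rule fls_eqI) simp
lemma Dfls_const: "Dfls g (fls_const c) = fls_const (der g c)"
  by (rule fls_eqI) simp
lemma Dfls_one[simp]: "Dfls g 1 = 0"
  using Dfls_const[of g 1] by simp
lemma Dfls_X_intpow[simp]: "Dfls g (fls_X_intpow a) = 0"
  by (rule fls_eqI) simp
lemma Dfls_of_int[simp]: "Dfls g (of_int k) = 0"
  by (simp add: fls_of_int Dfls_const)

lemma Dfls_mult: "Dfls g (F * G) = Dfls g F * G + F * Dfls g G"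
proof (rule fls_eqI)
  fix n
  let ?a = "fls_subdegree F" and ?b = "fls_subdegree G"
  have zF: "\<And>k. k < ?a \<Longrightarrow> fls_nth F k = 0" and zG: "\<And>k. k < ?b \<Longrightarrow> fls_nth G k = 0" by auto
  have zDF: "\<And>k. k < ?a \<Longrightarrow> fls_nth (Dfls g F) k = 0" and zDG: "\<And>k. k < ?b \<Longrightarrow> fls_nth (Dfls g G) k = 0" by auto
  show "fls_nth (Dfls g (F * G)) n = fls_nth (Dfls g F * G + F * Dfls g G) n"
    by (simp add: fls_times_nth_bounds[OF zF zG] fls_times_nth_bounds[OF zDF zG]
        fls_times_nth_bounds[OF zF zDG] der_sum der_mult sum.distrib)
qed

lemma der_of_int1[simp]: "der g (of_int x + 1) = 0"
  by (metis der_of_int of_int_1 of_int_add)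

lemma Dfls_deriv: "Dfls g (fls_deriv F) = fls_deriv (Dfls g F)"
  by (rule fls_eqI) (simp add: der_mult)

lemma Dfls_pow: "Dfls g (F ^ Suc k) = of_nat (Suc k) * F ^ k * Dfls g F"
  by (induction k) (auto simp: Dfls_mult algebra_simps)

lemma phi_nth: "fls_nth phi j = (if j = -1 then 1 else if j \<ge> 1 then var (nat j) else 0)"
  by (auto simp: phi_def)

lemma Dfls_phi:
  assumes "\<And>j. j \<le> 0 \<Longrightarrow> fls_nth g j = 0"
  shows "Dfls g phi = g"
proof (rule fls_eqI)
  fix j
  show "fls_nth (Dfls g phi) j = fls_nth g j"
    using assms[of j] by (auto simp: phi_nth der_var)
qed

lemma phi_subdegree: "fls_subdegree phi = -1"
  by (rule fls_subdegree_eqI) (auto simp: phi_nth)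

lemma phi_pow_below: "j < - int k \<Longrightarrow> fls_nth (phi ^ k) j = 0"
  by (rule fls_pow_nth_below_subdegree) (simp add: phi_subdegree)

lemma phi_pow_lead: "fls_nth (phi ^ k) (- int k) = 1"
  using fls_pow_base[of phi k] by (simp add: phi_subdegree phi_nth)

definition w0 :: "R fls" where "w0 = fls_right_inverse phi 1"

lemma phi_w0: "phi * w0 = 1"
  unfolding w0_def by (rule fls_right_inverse) (simp add: phi_subdegree phi_nth)

lemma wser_eq: "wser = w0"
proof -
  have "w0 * phi = 1" using phi_w0 by (simp add: mult.commute)
  moreover have "w = w0" if "w * phi = 1" for w
  proof -
    have "w = w * (phi * w0)" by (simp add: phi_w0)
    also have "\<dots> = (w * phi) * w0" by (simp add: mult.assoc)
    finally show ?thesis using that by simp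
  qed
  ultimately show ?thesis unfolding wser_def by (rule the_equality)
qed

lemma wser_subdegree: "fls_subdegree wser = 1"
  unfolding wser_eq w0_def using fls_lr_inverse_subdegree(2)[of 1 phi] by (simp add: phi_subdegree)

lemma wser_lead: "fls_nth wser 1 = 1"
  unfolding wser_eq w0_def using fls_lr_inverse_base(2)[of phi 1] by (simp add: phi_subdegree)

lemma wser_pow_below: "j < int k \<Longrightarrow> fls_nth (wser ^ k) j = 0"
  by (rule fls_pow_nth_below_subdegree) (simp add: wser_subdegree)

lemma wser_pow_lead: "fls_nth (wser ^ k) (int k) = 1"
  using fls_pow_base[of wser k] by (simp add: wser_subdegree wser_lead)

lemma phipow_below: "j < - k \<Longrightarrow> fls_nth (phipow k) j = 0"
  by (auto simp: phipow_def phi_pow_below wser_pow_below)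

lemma phipow_lead: "fls_nth (phipow k) (- k) = 1"
  using phi_pow_lead[of "nat k"] wser_pow_lead[of "nat (-k)"] by (auto simp: phipow_def)

inductive_set Pol :: "R fls set" where
  Pol_const: "fls_const c \<in> Pol"
| Pol_phi: "phi \<in> Pol"
| Pol_add: "P \<in> Pol \<Longrightarrow> Q \<in> Pol \<Longrightarrow> P + Q \<in> Pol"
| Pol_mult: "P \<in> Pol \<Longrightarrow> Q \<in> Pol \<Longrightarrow> P * Q \<in> Pol"

lemma Pol_zero[simp]: "0 \<in> Pol" using Pol_const[of 0] by simp
lemma Pol_one[simp]: "1 \<in> Pol" using Pol_const[of 1] by simp
lemma Pol_uminus: "P \<in> Pol \<Longrightarrow> - P \<in> Pol"
  using Pol_mult[OF Pol_const[of "-1"]] by simp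
lemma Pol_diff: "P \<in> Pol \<Longrightarrow> Q \<in> Pol \<Longrightarrow> P - Q \<in> Pol"
  using Pol_add[OF _ Pol_uminus] by (simp add: diff_conv_add_uminus del: add_uminus_conv_diff)
lemma Pol_of_int: "of_int k \<in> Pol" by (simp add: fls_of_int Pol_const)
lemma Pol_pow: "P \<in> Pol \<Longrightarrow> P ^ k \<in> Pol"
  by (induction k) (auto intro: Pol_mult)
lemma Pol_sum: "(\<And>x. x \<in> A \<Longrightarrow> f x \<in> Pol) \<Longrightarrow> sum f A \<in> Pol"
  by (induction A rule: infinite_finite_induct) (auto intro: Pol_add)

lemma Pol_deriv:
  assumes "P \<in> Pol"
  shows "\<exists>Q\<in>Pol. fls_deriv P = Q * phi_lam \<and> (\<forall>g. Dfls g P - Q * Dfls g phi \<in> Pol)"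
  using assms
proof induction
  case (Pol_const c)
  then show ?case by (intro bexI[of _ 0]) (auto simp: Dfls_const intro: Pol.intros)
next
  case Pol_phi
  then show ?case by (intro bexI[of _ 1]) (auto simp: phi_lam_def)
next
  case (Pol_add P1 P2)
  then obtain Q1 Q2 where q: "Q1 \<in> Pol" "fls_deriv P1 = Q1 * phi_lam" "\<forall>g. Dfls g P1 - Q1 * Dfls g phi \<in> Pol"
    "Q2 \<in> Pol" "fls_deriv P2 = Q2 * phi_lam" "\<forall>g. Dfls g P2 - Q2 * Dfls g phi \<in> Pol" by blast
  show ?case
  proof (intro bexI[of _ "Q1 + Q2"] conjI allI)
    fix g
    have "Dfls g (P1 + P2) - (Q1 + Q2) * Dfls g phi = (Dfls g P1 - Q1 * Dfls g phi) + (Dfls g P2 - Q2 * Dfls g phi)"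
      by (simp add: Dfls_add algebra_simps)
    then show "Dfls g (P1 + P2) - (Q1 + Q2) * Dfls g phi \<in> Pol" using q by (auto intro: Pol.intros)
  qed (use q in \<open>auto simp: algebra_simps intro: Pol.intros\<close>)
next
  case (Pol_mult P1 P2)
  then obtain Q1 Q2 where q: "Q1 \<in> Pol" "fls_deriv P1 = Q1 * phi_lam" "\<forall>g. Dfls g P1 - Q1 * Dfls g phi \<in> Pol"
    "Q2 \<in> Pol" "fls_deriv P2 = Q2 * phi_lam" "\<forall>g. Dfls g P2 - Q2 * Dfls g phi \<in> Pol" by blast
  show ?case
  proof (intro bexI[of _ "Q1 * P2 + P1 * Q2"] conjI allI)
    fix g
    have "Dfls g (P1 * P2) - (Q1 * P2 + P1 * Q2) * Dfls g phi = (Dfls g P1 - Q1 * Dfls g phi) * P2 + P1 * (Dfls g P2 - Q2 * Dfls g phi)"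
      by (simp add: Dfls_mult algebra_simps)
    then show "Dfls g (P1 * P2) - (Q1 * P2 + P1 * Q2) * Dfls g phi \<in> Pol" using q Pol_mult by (auto intro: Pol.intros)
  qed (use q Pol_mult in \<open>auto simp: algebra_simps intro: Pol.intros\<close>)
qed

definition isC :: "R fls \<Rightarrow> bool" where "isC F \<longleftrightarrow> (\<forall>j. j \<noteq> 0 \<longrightarrow> fls_nth F j = 0)"

lemma isC_eq: "isC F \<Longrightarrow> F = fls_const (fls_nth F 0)"
  unfolding isC_def by (intro fls_eqI) auto

lemma isC_const: "isC (fls_const c)" by (simp add: isC_def)
lemma isC_add: "isC F \<Longrightarrow> isC G \<Longrightarrow> isC (F + G)" by (simp add: isC_def)
lemma isC_mult: "isC F \<Longrightarrow> isC G \<Longrightarrow> isC (F * G)"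
  by (subst isC_eq[of F]) (auto simp: isC_def)
lemma isC_sum: "(\<And>x. x \<in> A \<Longrightarrow> isC (f x)) \<Longrightarrow> isC (sum f A)"
  by (induction A rule: infinite_finite_induct) (auto intro: isC_add simp: isC_const[of 0, simplified])

lemma Pol_rep:
  assumes "P \<in> Pol"
  shows "\<exists>p. (\<forall>k. isC (coeff p k)) \<and> P = poly p phi"
  using assms
proof induction
  case (Pol_const c)
  show ?case by (rule exI[of _ "[:fls_const c:]"]) (auto simp: coeff_pCons isC_const isC_const[of 0, simplified] split: nat.split)
next
  case Pol_phi
  show ?case by (rule exI[of _ "[:0, 1:]"]) (auto simp: coeff_pCons isC_const[of 0, simplified] isC_const[of 1, simplified] split: nat.split)
next
  case (Pol_add P Q)
  then obtain p q where "\<forall>k. isC (coeff p k)" "P = poly p phi" "\<forall>k. isC (coeff q k)" "Q = poly q phi" by blast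
  then show ?case by (intro exI[of _ "p + q"]) (auto intro: isC_add)
next
  case (Pol_mult P Q)
  then obtain p q where "\<forall>k. isC (coeff p k)" "P = poly p phi" "\<forall>k. isC (coeff q k)" "Q = poly q phi" by blast
  then show ?case by (intro exI[of _ "p * q"]) (auto simp: coeff_mult intro!: isC_sum isC_mult)
qed

lemma Pol_unique:
  assumes "P \<in> Pol" "\<And>j. j \<le> 0 \<Longrightarrow> fls_nth P j = 0"
  shows "P = 0"
proof -
  obtain p where p: "\<forall>k. isC (coeff p k)" "P = poly p phi" using Pol_rep[OF assms(1)] by blast
  have "p = 0"
  proof (rule ccontr)
    assume nz: "p \<noteq> 0"
    define K where "K = degree p"
    have cK: "coeff p K \<noteq> 0" unfolding K_def using nz by simp
    have c0: "fls_nth (coeff p K) 0 \<noteq> 0"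
      using cK isC_eq[of "coeff p K"] p(1) by force
    have "P = (\<Sum>i\<le>K. coeff p i * phi ^ i)" unfolding p(2) K_def by (rule poly_altdef)
    then have "fls_nth P (- int K) = (\<Sum>i\<le>K. fls_nth (coeff p i * phi ^ i) (- int K))"
      by (simp add: fls_nth_sum)
    also have "\<dots> = (\<Sum>i\<le>K. fls_nth (coeff p i) 0 * fls_nth (phi ^ i) (- int K))"
      by (rule sum.cong[OF refl]) (subst isC_eq[of "coeff p _"], use p(1) in auto)
    also have "\<dots> = (\<Sum>i\<in>{K}. fls_nth (coeff p i) 0 * fls_nth (phi ^ i) (- int K))"
      by (rule sum.mono_neutral_right) (auto simp: phi_pow_below)
    also have "\<dots> = fls_nth (coeff p K) 0" by (simp add: phi_pow_lead)
    finally show False using assms(2)[of "- int K"] c0 by simp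
  qed
  then show ?thesis using p by simp
qed

function ccf :: "R fls \<Rightarrow> int \<Rightarrow> nat \<Rightarrow> R" where
  "ccf F M t = fls_nth F (int t - M) - (\<Sum>s\<in>{..<t}. ccf F M s * fls_nth (phipow (M - int s)) (int t - M))"
  by auto
termination by (relation "measure (\<lambda>(F,M,t). t)") auto

declare ccf.simps[simp del]

lemma expansion_exists: "\<exists>c. is_phi_expansion F c"
proof -
  define M where "M = - fls_subdegree F"
  define c where "c k = (if k \<le> M then ccf F M (nat (M - k)) else 0)" for k
  have "is_phi_expansion F c"
    unfolding is_phi_expansion_def
  proof (intro exI[of _ M] conjI allI impI)
    show "\<And>k. M < k \<Longrightarrow> c k = 0" by (simp add: c_def)
    fix j
    show "fls_nth F j = (\<Sum>k\<in>{-j..M}. c k * fls_nth (phipow k) j)"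
    proof (cases "j < - M")
      case True
      then show ?thesis by (simp add: M_def)
    next
      case False
      define t where "t = nat (j + M)"
      have tj: "int t - M = j" using False by (simp add: t_def)
      have "(\<Sum>k\<in>{-j..M}. c k * fls_nth (phipow k) j) = (\<Sum>s\<in>{..t}. ccf F M s * fls_nth (phipow (M - int s)) j)"
        by (rule sum.reindex_bij_witness[of _ "\<lambda>s. M - int s" "\<lambda>k. nat (M - k)"])
           (use tj in \<open>auto simp: c_def\<close>)
      also have "\<dots> = (\<Sum>s\<in>{..<t}. ccf F M s * fls_nth (phipow (M - int s)) j) + ccf F M t * fls_nth (phipow (M - int t)) j"
        by (simp add: lessThan_Suc_atMost[symmetric])
      also have "\<dots> = fls_nth F j"
        using phipow_lead[of "M - int t"] tj by (subst (2) ccf.simps) simp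
      finally show ?thesis by simp
    qed
  qed
  then show ?thesis by blast
qed

lemma expansion_ext:
  assumes "\<forall>k>M. c k = 0" "M \<le> N"
  shows "(\<Sum>k\<in>{-j..M}. c k * fls_nth (phipow k) j) = (\<Sum>k\<in>{-j..N}. c k * fls_nth (phipow k) j)"
  by (rule sum.mono_neutral_left) (use assms in auto)

lemma expansion_unique:
  assumes "is_phi_expansion F c" "is_phi_expansion F c'"
  shows "c = c'"
proof (rule ccontr)
  assume ne: "c \<noteq> c'"
  obtain M where M: "\<forall>k>M. c k = 0" "\<forall>j. fls_nth F j = (\<Sum>k\<in>{-j..M}. c k * fls_nth (phipow k) j)"
    using assms(1) unfolding is_phi_expansion_def by blast
  obtain M' where M': "\<forall>k>M'. c' k = 0" "\<forall>j. fls_nth F j = (\<Sum>k\<in>{-j..M'}. c' k * fls_nth (phipow k) j)"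
    using assms(2) unfolding is_phi_expansion_def by blast
  define N where "N = max M M'"
  define d where "d k = c k - c' k" for k
  have dN: "\<forall>k>N. d k = 0" using M(1) M'(1) by (simp add: d_def N_def)
  have d0: "(\<Sum>k\<in>{-j..N}. d k * fls_nth (phipow k) j) = 0" for j
  proof -
    have "(\<Sum>k\<in>{-j..N}. c k * fls_nth (phipow k) j) = fls_nth F j"
      using M(2) expansion_ext[OF M(1), of N j] by (simp add: N_def)
    moreover have "(\<Sum>k\<in>{-j..N}. c' k * fls_nth (phipow k) j) = fls_nth F j"
      using M'(2) expansion_ext[OF M'(1), of N j] by (simp add: N_def)
    ultimately show ?thesis by (simp add: d_def left_diff_distrib sum_subtractf)
  qed
  obtain k0 where k0: "d k0 \<noteq> 0" using ne by (auto simp: d_def fun_eq_iff)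
  define A where "A = {k\<in>{k0..N}. d k \<noteq> 0}"
  have k0N: "k0 \<le> N" using dN k0 by (meson not_le)
  have fA: "finite A" "A \<noteq> {}"
    by (rule finite_subset[of _ "{k0..N}"]) (use k0 k0N in \<open>auto simp: A_def\<close>)
  define K where "K = Max A"
  have KA: "K \<in> A" using fA by (simp add: K_def)
  have above: "d k = 0" if "k > K" for k
  proof (cases "k \<le> N")
    case True
    then have "k \<notin> A" using that fA K_def Max_ge by fastforce
    then show ?thesis using KA True that by (auto simp: A_def)
  qed (use dN in auto)
  have "(\<Sum>k\<in>{-(-K)..N}. d k * fls_nth (phipow k) (-K)) = (\<Sum>k\<in>{K}. d k * fls_nth (phipow k) (-K))"
    by (rule sum.mono_neutral_right) (use KA above in \<open>auto simp: A_def\<close>)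
  then have "d K = 0" using d0[of "-K"] phipow_lead[of K] by simp
  then show False using KA by (simp add: A_def)
qed

lemma phi_coeff_exp: "is_phi_expansion F (phi_coeff F)"
  unfolding phi_coeff_def using expansion_exists[of F] expansion_unique[of F]
  by (metis theI)

lemma P_phi_props:
  "P_phi F \<in> Pol \<and> (\<forall>j\<le>0. fls_nth (frakP_phi F) j = 0)"
proof -
  define c where "c = phi_coeff F"
  obtain M where M: "\<forall>k>M. c k = 0" "\<forall>j. fls_nth F j = (\<Sum>k\<in>{-j..M}. c k * fls_nth (phipow k) j)"
    using phi_coeff_exp[of F] unfolding is_phi_expansion_def c_def by blast
  have P: "P_phi F = (\<Sum>k\<in>{0..M}. fls_const (c k) * phipow k)"
    unfolding P_phi_def c_def[symmetric]
    by (rule sum.mono_neutral_left) (use M(1) leI in fastforce)+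
  have "P_phi F \<in> Pol"
    unfolding P by (rule Pol_sum) (auto simp: phipow_def intro!: Pol_mult Pol_const Pol_pow Pol_phi)
  moreover have "fls_nth (frakP_phi F) j = 0" if j: "j \<le> 0" for j
  proof -
    have "fls_nth (P_phi F) j = (\<Sum>k\<in>{0..M}. c k * fls_nth (phipow k) j)"
      unfolding P by (simp add: fls_nth_sum)
    also have "\<dots> = (\<Sum>k\<in>{-j..M}. c k * fls_nth (phipow k) j)"
      by (rule sum.mono_neutral_right) (use j in \<open>auto simp: phipow_below\<close>)
    finally show ?thesis using M(2) by (simp add: frakP_phi_def)
  qed
  ultimately show ?thesis by blast
qed

lemma ring_identity:
  fixes Dab Dba fa fb Xa Xb dA dB Qa Qb Pa Pb Ea Eb ka kb Y Z fc Pc phl :: "'a::comm_ring_1"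
  assumes "Dab = Xb * (dA - Qa * phl) - Eb - Qb * fa"
    "Dba = Xa * (dB - Qb * phl) - Ea - Qa * fb"
    "fa = Xa * phl - Pa" "fb = Xb * phl - Pb"
    "Xb * dA = ka * Y + Z" "Xa * dB = kb * Y + Z" "Y = fc + Pc"
  shows "Dab - Dba - (ka - kb) * fc = Ea - Eb + Qb * Pa - Qa * Pb + (ka - kb) * Pc"
proof -
  have h1: "Xb * dA - Xa * dB = (ka - kb) * (fc + Pc)"
  proof -
    have "Xb * dA - Xa * dB = (ka * Y + Z) - (kb * Y + Z)" by (simp only: assms(5,6))
    then show ?thesis by (simp add: assms(7) algebra_simps)
  qed
  have "Dab - Dba - (ka - kb) * fc = (Xb * dA - Xa * dB) - (ka - kb) * fc - Eb + Ea + Qb * Pa - Qa * Pb"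
    by (simp only: assms(1-4)) (simp add: algebra_simps)
  also have "\<dots> = Ea - Eb + Qb * Pa - Qa * Pb + (ka - kb) * Pc"
    by (simp only: h1) (simp add: algebra_simps)
  finally show ?thesis .
qed

lemma f_ser_props: "\<exists>P\<in>Pol. f_ser a = fls_X_intpow a * phi_lam - P"
  "\<And>j. j \<le> 0 \<Longrightarrow> fls_nth (f_ser a) j = 0"
  using P_phi_props[of "fls_X_intpow a * phi_lam"] unfolding f_ser_def frakP_phi_def by auto

lemma Xderiv: "fls_X_intpow b * fls_deriv (fls_X_intpow a * phi_lam)
   = of_int a * (fls_X_intpow (a + b - 1) * phi_lam) + fls_X_intpow (a + b) * fls_deriv phi_lam"
proof -
  have "fls_X_intpow b * fls_deriv (fls_X_intpow a * phi_lam) =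
     fls_X_intpow b * (fls_X_intpow a * fls_deriv phi_lam + of_int a * fls_X_intpow (a - 1) * phi_lam)"
    by (simp add: fls_deriv_X_intpow)
  also have "\<dots> = of_int a * ((fls_X_intpow b * fls_X_intpow (a - 1)) * phi_lam) + (fls_X_intpow b * fls_X_intpow a) * fls_deriv phi_lam"
    by (simp add: algebra_simps)
  also have "\<dots> = of_int a * (fls_X_intpow (a + b - 1) * phi_lam) + fls_X_intpow (a + b) * fls_deriv phi_lam"
    by (simp only: fls_X_intpow_times_fls_X_intpow) (simp add: algebra_simps)
  finally show ?thesis .
qed

lemma Dfls_vanish: "(\<And>j. j \<le> 0 \<Longrightarrow> fls_nth F j = 0) \<Longrightarrow> j \<le> 0 \<Longrightarrow> fls_nth (Dfls g F) j = 0"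
  by simp

lemma witt_series:
  "Dfls (f_ser a) (f_ser b) - Dfls (f_ser b) (f_ser a) = of_int (a - b) * f_ser (a + b - 1)"
proof -
  define fa fb fc where "fa = f_ser a" and "fb = f_ser b" and "fc = f_ser (a + b - 1)"
  obtain Pa where Pa: "Pa \<in> Pol" "fa = fls_X_intpow a * phi_lam - Pa" using f_ser_props(1)[of a] fa_def by blast
  obtain Pb where Pb: "Pb \<in> Pol" "fb = fls_X_intpow b * phi_lam - Pb" using f_ser_props(1)[of b] fb_def by blast
  obtain Pc where Pc: "Pc \<in> Pol" "fc = fls_X_intpow (a + b - 1) * phi_lam - Pc" using f_ser_props(1)[of "a+b-1"] fc_def by blast
  obtain Qa where Qa: "Qa \<in> Pol" "fls_deriv Pa = Qa * phi_lam" "\<forall>g. Dfls g Pa - Qa * Dfls g phi \<in> Pol"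
    using Pol_deriv[OF Pa(1)] by blast
  obtain Qb where Qb: "Qb \<in> Pol" "fls_deriv Pb = Qb * phi_lam" "\<forall>g. Dfls g Pb - Qb * Dfls g phi \<in> Pol"
    using Pol_deriv[OF Pb(1)] by blast
  have va: "\<And>j. j \<le> 0 \<Longrightarrow> fls_nth fa j = 0" and vb: "\<And>j. j \<le> 0 \<Longrightarrow> fls_nth fb j = 0"
    and vc: "\<And>j. j \<le> 0 \<Longrightarrow> fls_nth fc j = 0"
    using f_ser_props(2) fa_def fb_def fc_def by auto
  have pa: "Dfls fa phi = fa" by (rule Dfls_phi[OF va])
  have pb: "Dfls fb phi = fb" by (rule Dfls_phi[OF vb])
  define Ea where "Ea = Dfls fb Pa - Qa * fb"
  define Eb where "Eb = Dfls fa Pb - Qb * fa"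
  have Ea: "Ea \<in> Pol" using Qa(3)[rule_format, of fb] pb by (simp add: Ea_def)
  have Eb: "Eb \<in> Pol" using Qb(3)[rule_format, of fa] pa by (simp add: Eb_def)
  have dfa: "fls_deriv fa = fls_deriv (fls_X_intpow a * phi_lam) - Qa * phi_lam" using Pa(2) Qa(2) by simp
  have dfb: "fls_deriv fb = fls_deriv (fls_X_intpow b * phi_lam) - Qb * phi_lam" using Pb(2) Qb(2) by simp
  have Dab: "Dfls fa fb = fls_X_intpow b * (fls_deriv (fls_X_intpow a * phi_lam) - Qa * phi_lam) - Eb - Qb * fa"
  proof -
    have "Dfls fa fb = fls_X_intpow b * fls_deriv fa - Dfls fa Pb"
      by (simp add: Pb(2) Dfls_diff Dfls_mult phi_lam_def Dfls_deriv pa)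
    then show ?thesis by (simp add: dfa Eb_def)
  qed
  have Dba: "Dfls fb fa = fls_X_intpow a * (fls_deriv (fls_X_intpow b * phi_lam) - Qb * phi_lam) - Ea - Qa * fb"
  proof -
    have "Dfls fb fa = fls_X_intpow a * fls_deriv fb - Dfls fb Pa"
      by (simp add: Pa(2) Dfls_diff Dfls_mult phi_lam_def Dfls_deriv pb)
    then show ?thesis by (simp add: dfb Ea_def)
  qed
  have X1: "fls_X_intpow b * fls_deriv (fls_X_intpow a * phi_lam)
     = of_int a * (fls_X_intpow (a + b - 1) * phi_lam) + fls_X_intpow (a + b) * fls_deriv phi_lam"
    by (rule Xderiv)
  have X2: "fls_X_intpow a * fls_deriv (fls_X_intpow b * phi_lam)
     = of_int b * (fls_X_intpow (a + b - 1) * phi_lam) + fls_X_intpow (a + b) * fls_deriv phi_lam"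
    using Xderiv[of a b] by (simp add: add.commute)
  have Y: "fls_X_intpow (a + b - 1) * phi_lam = fc + Pc" using Pc(2) by simp
  have G: "Dfls fa fb - Dfls fb fa - (of_int a - of_int b) * fc = Ea - Eb + Qb * Pa - Qa * Pb + (of_int a - of_int b) * Pc"
    by (rule ring_identity[OF Dab Dba Pa(2) Pb(2) X1 X2 Y])
  have GP: "Dfls fa fb - Dfls fb fa - (of_int a - of_int b) * fc \<in> Pol"
    unfolding G using Ea Eb Pa(1) Pb(1) Qa(1) Qb(1) Pc(1)
    by (intro Pol_add Pol_diff Pol_mult Pol_of_int) auto
  have GV: "fls_nth (Dfls fa fb - Dfls fb fa - (of_int a - of_int b) * fc) j = 0" if "j \<le> 0" for j
  proof -
    have c: "(of_int a - of_int b :: R fls) = fls_const (of_int (a - b))"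
      by (metis fls_of_int of_int_diff)
    show ?thesis using va vb vc that by (simp add: c)
  qed
  have "Dfls fa fb - Dfls fb fa - (of_int a - of_int b) * fc = 0"
    by (rule Pol_unique[OF GP GV])
  then show ?thesis by (simp add: fa_def fb_def fc_def)
qed

theorem mainTheorem1:
  fixes n m :: int and p :: R
  assumes "in_R p"
  shows "S n (S m p) - S m (S n p) = of_int (m - n) * S (n + m) p"
proof -
  have "S n (S m p) - S m (S n p) = der (Dfls (f_ser (1 - n)) (f_ser (1 - m)) - Dfls (f_ser (1 - m)) (f_ser (1 - n))) p"
    unfolding S_def by (rule der_comm)
  also have "\<dots> = der (of_int (m - n) * f_ser (1 - (n + m))) p"
  proof -
    have e: "(1 - n) - (1 - m) = m - n" "(1 - n) + (1 - m) - 1 = 1 - (n + m)" by simp_all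
    show ?thesis using witt_series[of "1 - n" "1 - m", unfolded e] by (simp only:)
  qed
  also have "\<dots> = of_int (m - n) * S (n + m) p"
    unfolding S_def by (rule der_fofint)
  finally show ?thesis .
qed
end
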